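(* Let $d\ge 2$ and let $G=(V,E)$ be any graph on $n$ vertices with maximum degree at most $d$. Let $\varepsilon>0$, let $p<(1-\varepsilon)/(d-1)$ be a contagion probability, and let $I_0\subseteq V$ be nonempty. Consider the Reed–Frost SIR process on $G$ with initial infectious set $I_0$ and contagion probability $p$. Then there is a constant $C>0$, depending only on $\varepsilon$, such that with high probability the process stops within $C\log n$ time steps and the total number of nodes that are ever infectious is at most $C|I_0|\log n$.
   Context: **Reed–Frost SIR process.** Let $G=(V,E)$ be a graph, $p\in[0,1]$ the contagion probability, and $I_0\subseteq V$ the initially infectious set. Time is discrete. At each time every node is in exactly one of three states: susceptible, infectious, or recovered. At time $0$ the nodes of $I_0$ are infectious and all other nodes are susceptible. At each step $t\to t+1$: - each node $u$ that is infectious at time $t$ independently, for each edge $\{u,v\}$ with $v$ susceptible at time $t$, infects $v$ with probability $p$; - a susceptible node infected by at least one neighbour becomes infectious at time $t+1$; - every node infectious at time $t$ becomes recovered at time $t+1$; - all other nodes keep their state. The process stops when there are no infectious nodes. **With high probability.** An event holds with high probability if it holds with probability at least $1-n^{-\Omega(1)}$, where $n=|V|$. *)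

theory Defs
  imports "HOL-Probability.Probability"
begin

text \<open>A state of the Reed-Frost SIR process is a pair (I, R) of the infectious and the
  recovered nodes; the susceptible nodes are V - I - R.\<close>

definition rf_step :: "(nat \<Rightarrow> nat \<Rightarrow> bool) \<Rightarrow> nat set \<Rightarrow> real \<Rightarrow> nat set \<times> nat set
    \<Rightarrow> (nat set \<times> nat set) pmf" where
  "rf_step E V p = (\<lambda>(I, R).
     let S = V - I - R in
     map_pmf (\<lambda>c. ({v \<in> S. \<exists>u\<in>I. E u v \<and> c (u, v)}, R \<union> I))
       (Pi_pmf {(u, v). u \<in> I \<and> v \<in> S \<and> E u v} False (\<lambda>_. bernoulli_pmf p)))"

fun rf_state :: "(nat \<Rightarrow> nat \<Rightarrow> bool) \<Rightarrow> nat set \<Rightarrow> real \<Rightarrow> nat set \<Rightarrow> nat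
    \<Rightarrow> (nat set \<times> nat set) pmf" where
  "rf_state E V p I0 0 = return_pmf (I0, {})"
| "rf_state E V p I0 (Suc t) = bind_pmf (rf_state E V p I0 t) (rf_step E V p)"

end

theory Submission
  imports Defs
begin

lemma card_filter_sum: "finite N \<Longrightarrow> card {x\<in>N. c x} = (\<Sum>x\<in>N. if c x then 1 else (0::nat))"
  by (simp add: sum.If_cases Int_def)

lemma card_filter_sum_real: "finite N \<Longrightarrow> real (card {x\<in>N. c x}) = (\<Sum>x\<in>N. if c x then 1 else (0::real))"
  by (simp add: sum.If_cases Int_def)

lemma pi_card:
  assumes "finite N" "0 \<le> p" "p \<le> 1"
  shows "(\<integral>\<^sup>+c. ennreal (real (card {x\<in>N. c x})) \<partial>Pi_pmf N False (\<lambda>_. bernoulli_pmf p))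
         = ennreal (real (card N) * p)"
proof -
  have "(\<integral>\<^sup>+c. ennreal (real (card {x\<in>N. c x})) \<partial>Pi_pmf N False (\<lambda>_. bernoulli_pmf p))
     = (\<integral>\<^sup>+c. (\<Sum>x\<in>N. ennreal (if c x then 1 else 0)) \<partial>Pi_pmf N False (\<lambda>_. bernoulli_pmf p))"
  proof (intro nn_integral_cong)
    fix c :: "'a \<Rightarrow> bool"
    have "real (card {x\<in>N. c x}) = (\<Sum>x\<in>N. (if c x then 1 else 0::real))"
      using assms(1) by (rule card_filter_sum_real)
    then show "ennreal (real (card {x\<in>N. c x})) = (\<Sum>x\<in>N. ennreal (if c x then 1 else 0))"
      by (simp add: sum_ennreal)
  qed
  also have "\<dots> = (\<Sum>x\<in>N. \<integral>\<^sup>+c. ennreal (if c x then 1 else 0) \<partial>Pi_pmf N False (\<lambda>_. bernoulli_pmf p))"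
    by (rule nn_integral_sum) auto
  also have "\<dots> = (\<Sum>x\<in>N. ennreal p)"
  proof (rule sum.cong[OF refl])
    fix x assume x: "x \<in> N"
    have "(\<integral>\<^sup>+c. ennreal (if c x then 1 else 0) \<partial>Pi_pmf N False (\<lambda>_. bernoulli_pmf p))
       = (\<integral>\<^sup>+b. ennreal (if b then 1 else 0) \<partial>map_pmf (\<lambda>f. f x) (Pi_pmf N False (\<lambda>_. bernoulli_pmf p)))"
      by simp
    also have "\<dots> = (\<integral>\<^sup>+b. ennreal (if b then 1 else 0) \<partial>bernoulli_pmf p)"
      using x assms(1) by (simp only: Pi_pmf_component) simp
    also have "\<dots> = ennreal p" using assms by simp
    finally show "(\<integral>\<^sup>+c. ennreal (if c x then 1 else 0) \<partial>Pi_pmf N False (\<lambda>_. bernoulli_pmf p)) = ennreal p" .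
  qed
  also have "\<dots> = ennreal (real (card N) * p)"
    using assms by (simp add: ennreal_mult' ennreal_of_nat_eq_real_of_nat)
  finally show ?thesis .
qed

lemma pi_exp:
  assumes "finite N" "0 \<le> p" "p \<le> 1"
  shows "(\<integral>\<^sup>+c. ennreal (exp (\<mu> * real (card {x\<in>N. c x}))) \<partial>Pi_pmf N False (\<lambda>_. bernoulli_pmf p))
         = ennreal ((1 + p * (exp \<mu> - 1)) ^ card N)"
proof -
  have "(\<integral>\<^sup>+c. ennreal (exp (\<mu> * real (card {x\<in>N. c x}))) \<partial>Pi_pmf N False (\<lambda>_. bernoulli_pmf p))
     = (\<integral>\<^sup>+c. (\<Prod>x\<in>N. (\<lambda>x b. ennreal (if b then exp \<mu> else 1)) x (c x)) \<partial>Pi_pmf N False (\<lambda>_. bernoulli_pmf p))"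
  proof (intro nn_integral_cong)
    fix c :: "'a \<Rightarrow> bool"
    have "exp (\<mu> * real (card {x\<in>N. c x})) = exp (\<Sum>x\<in>N. \<mu> * (if c x then 1 else 0))"
      using assms(1) by (simp add: card_filter_sum_real sum_distrib_left if_distrib)
    also have "\<dots> = (\<Prod>x\<in>N. exp (\<mu> * (if c x then 1 else 0)))" by (simp add: exp_sum assms(1))
    also have "\<dots> = (\<Prod>x\<in>N. (if c x then exp \<mu> else 1))" by (intro prod.cong) auto
    finally show "ennreal (exp (\<mu> * real (card {x\<in>N. c x}))) = (\<Prod>x\<in>N. (\<lambda>x b. ennreal (if b then exp \<mu> else 1)) x (c x))"
      by (simp add: prod_ennreal)
  qed
  also have "\<dots> = (\<Prod>x\<in>N. \<integral>\<^sup>+b. ennreal (if b then exp \<mu> else 1) \<partial>bernoulli_pmf p)"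
    by (rule nn_integral_prod_Pi_pmf[OF assms(1)])
  also have "\<dots> = (\<Prod>x\<in>N. ennreal (1 + p * (exp \<mu> - 1)))"
    using assms by (intro prod.cong) (auto simp: ennreal_mult'[symmetric] ennreal_plus[symmetric] algebra_simps)
  also have "\<dots> = ennreal ((1 + p * (exp \<mu> - 1)) ^ card N)"
  proof -
    have "0 \<le> p * exp \<mu>" using assms by simp
    moreover have "1 + p * (exp \<mu> - 1) = (1 - p) + p * exp \<mu>" by (simp add: algebra_simps)
    ultimately have "0 \<le> 1 + p * (exp \<mu> - 1)" using assms by linarith
    then show ?thesis by (simp add: ennreal_power)
  qed
  finally show ?thesis .
qed

definition Nset :: "(nat \<Rightarrow> nat \<Rightarrow> bool) \<Rightarrow> nat set \<Rightarrow> nat set \<Rightarrow> nat set \<Rightarrow> (nat \<times> nat) set" where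
  "Nset E V I R = {(u, v). u \<in> I \<and> v \<in> V - I - R \<and> E u v}"

definition Inv0 :: "nat set \<Rightarrow> nat set \<Rightarrow> nat set \<Rightarrow> bool" where
  "Inv0 V I R \<longleftrightarrow> I \<subseteq> V \<and> R \<subseteq> V \<and> I \<inter> R = {}"

definition Inv :: "(nat \<Rightarrow> nat \<Rightarrow> bool) \<Rightarrow> nat set \<Rightarrow> nat set \<Rightarrow> nat set \<Rightarrow> bool" where
  "Inv E V I R \<longleftrightarrow> Inv0 V I R \<and> (\<forall>v\<in>I. \<exists>u\<in>R. E u v)"

lemma Inv0_sub: "Inv0 V I R \<Longrightarrow> I \<subseteq> V" by (simp add: Inv0_def)

lemma step_nn:
  "(\<integral>\<^sup>+s. F s \<partial>rf_step E V p (I, R)) =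
   (\<integral>\<^sup>+c. F ({v\<in>V-I-R. \<exists>u\<in>I. E u v \<and> c (u, v)}, R \<union> I) \<partial>Pi_pmf (Nset E V I R) False (\<lambda>_. bernoulli_pmf p))"
  by (simp add: rf_step_def Nset_def Let_def)

lemma inv_step:
  assumes "Inv0 V I R" "s \<in> set_pmf (rf_step E V p (I, R))"
  shows "Inv E V (fst s) (snd s)"
  using assms by (auto simp: rf_step_def Let_def Inv_def Inv0_def)

lemma finite_Nset: "finite V \<Longrightarrow> I \<subseteq> V \<Longrightarrow> finite (Nset E V I R)"
  by (rule finite_subset[of _ "V \<times> V"]) (auto simp: Nset_def)

lemma card_img:
  assumes "finite V" "I \<subseteq> V"
  shows "card {v\<in>V-I-R. \<exists>u\<in>I. E u v \<and> c (u, v)} \<le> card {x\<in>Nset E V I R. c x}"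
proof -
  have "{v\<in>V-I-R. \<exists>u\<in>I. E u v \<and> c (u, v)} \<subseteq> snd ` {x\<in>Nset E V I R. c x}"
    by (force simp: Nset_def)
  then have "card {v\<in>V-I-R. \<exists>u\<in>I. E u v \<and> c (u, v)} \<le> card (snd ` {x\<in>Nset E V I R. c x})"
    using assms finite_Nset by (intro card_mono) auto
  also have "\<dots> \<le> card {x\<in>Nset E V I R. c x}"
    using assms finite_Nset by (intro card_image_le) auto
  finally show ?thesis .
qed

lemma card_Nset:
  assumes "finite V" "Inv0 V I R" "\<And>u. u \<in> I \<Longrightarrow> card {v\<in>V-I-R. E u v} \<le> k"
  shows "card (Nset E V I R) \<le> k * card I"
proof -
  have "Nset E V I R = Sigma I (\<lambda>u. {v\<in>V-I-R. E u v})" by (auto simp: Nset_def)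
  moreover have "finite I" using assms by (auto simp: Inv0_def intro: finite_subset)
  ultimately have "card (Nset E V I R) = (\<Sum>u\<in>I. card {v\<in>V-I-R. E u v})"
    using assms(1) by (simp add: card_SigmaI)
  also have "\<dots> \<le> (\<Sum>u\<in>I. k)" by (intro sum_mono assms(3))
  finally show ?thesis by (simp add: mult.commute)
qed

lemma nbr0:
  assumes "finite V" "Inv0 V I R" "\<forall>v\<in>V. card {u \<in> V. E v u} \<le> d" "u \<in> I"
  shows "card {v\<in>V-I-R. E u v} \<le> d"
proof -
  have "card {v\<in>V-I-R. E u v} \<le> card {v \<in> V. E u v}" using assms(1) by (intro card_mono) auto
  also have "\<dots> \<le> d" using assms by (auto simp: Inv0_def)
  finally show ?thesis .
qed

lemma nbr1:
  assumes "finite V" "Inv E V I R" "\<forall>v\<in>V. card {u \<in> V. E v u} \<le> d" "u \<in> I"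
     "\<forall>u v. E u v \<longrightarrow> u \<in> V \<and> v \<in> V \<and> u \<noteq> v \<and> E v u"
  shows "card {v\<in>V-I-R. E u v} \<le> d - 1"
proof -
  obtain w where w: "w \<in> R" "E w u" using assms by (auto simp: Inv_def)
  then have wV: "w \<in> V" "E u w" using assms(5) by auto
  have "card {v\<in>V-I-R. E u v} \<le> card ({v \<in> V. E u v} - {w})" using assms(1) w by (intro card_mono) auto
  also have "\<dots> = card {v \<in> V. E u v} - 1" using wV assms(1) by (subst card_Diff_singleton) auto
  also have "\<dots> \<le> d - 1"
  proof -
    have "u \<in> V" using assms by (auto simp: Inv_def Inv0_def)
    then have "card {v \<in> V. E u v} \<le> d" using assms(3) by auto
    then show ?thesis by (rule diff_le_mono)
  qed
  finally show ?thesis .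
qed

lemma step_first:
  assumes "finite V" "Inv0 V I R" "0 \<le> p" "p \<le> 1" "card (Nset E V I R) \<le> k * card I"
  shows "(\<integral>\<^sup>+s. ennreal (real (card (fst s))) \<partial>rf_step E V p (I, R)) \<le> ennreal (real k * p * real (card I))"
proof -
  have "(\<integral>\<^sup>+s. ennreal (real (card (fst s))) \<partial>rf_step E V p (I, R)) \<le>
        (\<integral>\<^sup>+c. ennreal (real (card {x\<in>Nset E V I R. c x})) \<partial>Pi_pmf (Nset E V I R) False (\<lambda>_. bernoulli_pmf p))"
    unfolding step_nn using card_img[OF assms(1) Inv0_sub[OF assms(2)]] by (intro nn_integral_mono) (simp add: ennreal_leI)
  also have "\<dots> = ennreal (real (card (Nset E V I R)) * p)"
    using assms finite_Nset Inv0_sub[OF assms(2)] by (intro pi_card) auto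
  also have "\<dots> \<le> ennreal (real k * p * real (card I))"
  proof (intro ennreal_leI)
    have "real (card (Nset E V I R)) \<le> real k * real (card I)" using assms(5) of_nat_mono by fastforce
    then show "real (card (Nset E V I R)) * p \<le> real k * p * real (card I)"
      using assms(3) by (metis mult.assoc mult.commute mult_right_mono)
  qed
  finally show ?thesis .
qed

lemma step_exp:
  assumes "finite V" "Inv0 V I R" "0 \<le> p" "p \<le> 1" "card (Nset E V I R) \<le> k * card I" "0 \<le> \<mu>"
  shows "(\<integral>\<^sup>+s. ennreal (exp (lam * real (card (snd s)) + \<mu> * real (card (fst s)))) \<partial>rf_step E V p (I, R))
     \<le> ennreal (exp (lam * real (card R) + (lam + real k * p * (exp \<mu> - 1)) * real (card I)))"
proof -
  have fin: "finite I" "finite R" using assms by (auto simp: Inv0_def intro: finite_subset)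
  have cu: "card (R \<union> I) = card R + card I" using fin assms(2) by (subst card_Un_disjoint) (auto simp: Inv0_def)
  define a where "a = exp (lam * real (card R) + lam * real (card I))"
  have "(\<integral>\<^sup>+s. ennreal (exp (lam * real (card (snd s)) + \<mu> * real (card (fst s)))) \<partial>rf_step E V p (I, R)) \<le>
        (\<integral>\<^sup>+c. ennreal a * ennreal (exp (\<mu> * real (card {x\<in>Nset E V I R. c x}))) \<partial>Pi_pmf (Nset E V I R) False (\<lambda>_. bernoulli_pmf p))"
    unfolding step_nn
  proof (intro nn_integral_mono)
    fix c :: "nat \<times> nat \<Rightarrow> bool"
    have "\<mu> * real (card {v\<in>V-I-R. \<exists>u\<in>I. E u v \<and> c (u, v)}) \<le> \<mu> * real (card {x\<in>Nset E V I R. c x})"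
      using card_img[OF assms(1) Inv0_sub[OF assms(2)]] assms(6) by (intro mult_left_mono) auto
    then have "exp (lam * real (card (R \<union> I)) + \<mu> * real (card {v\<in>V-I-R. \<exists>u\<in>I. E u v \<and> c (u, v)}))
       \<le> a * exp (\<mu> * real (card {x\<in>Nset E V I R. c x}))"
      unfolding a_def cu by (simp add: exp_add[symmetric] algebra_simps)
    then show "ennreal (exp (lam * real (card (snd (({v\<in>V-I-R. \<exists>u\<in>I. E u v \<and> c (u, v)}, R \<union> I)))) +
          \<mu> * real (card (fst (({v\<in>V-I-R. \<exists>u\<in>I. E u v \<and> c (u, v)}, R \<union> I))))))
       \<le> ennreal a * ennreal (exp (\<mu> * real (card {x\<in>Nset E V I R. c x})))"
      by (simp add: ennreal_mult'[symmetric] a_def ennreal_leI)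
  qed
  also have "\<dots> = ennreal a * ennreal ((1 + p * (exp \<mu> - 1)) ^ card (Nset E V I R))"
    using assms finite_Nset Inv0_sub[OF assms(2)] by (simp add: nn_integral_cmult pi_exp)
  also have "\<dots> \<le> ennreal a * ennreal (exp (real k * p * (exp \<mu> - 1) * real (card I)))"
  proof (intro mult_left_mono ennreal_leI)
    have x0: "0 \<le> p * (exp \<mu> - 1)" using assms by simp
    have "(1 + p * (exp \<mu> - 1)) ^ card (Nset E V I R) \<le> exp (p * (exp \<mu> - 1)) ^ card (Nset E V I R)"
      using x0 by (intro power_mono) (auto simp: exp_ge_add_one_self add.commute)
    also have "\<dots> = exp (real (card (Nset E V I R)) * (p * (exp \<mu> - 1)))" by (simp add: exp_of_nat_mult)
    also have "\<dots> \<le> exp (real k * p * (exp \<mu> - 1) * real (card I))"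
    proof -
      have "real (card (Nset E V I R)) \<le> real k * real (card I)" using assms(5) of_nat_mono by fastforce
      then have "real (card (Nset E V I R)) * (p * (exp \<mu> - 1)) \<le> real k * real (card I) * (p * (exp \<mu> - 1))"
        using x0 by (intro mult_right_mono)
      then show ?thesis by (simp add: algebra_simps)
    qed
    finally show "(1 + p * (exp \<mu> - 1)) ^ card (Nset E V I R) \<le> exp (real k * p * (exp \<mu> - 1) * real (card I))" .
  qed auto
  also have "\<dots> = ennreal (exp (lam * real (card R) + (lam + real k * p * (exp \<mu> - 1)) * real (card I)))"
    unfolding a_def by (simp add: ennreal_mult'[symmetric] exp_add[symmetric] algebra_simps)
  finally show ?thesis .
qed

lemma markov_pmf:
  fixes M :: "'a pmf" and f :: "'a \<Rightarrow> real"
  assumes "a > 0" "0 \<le> b" "\<And>s. s \<in> set_pmf M \<Longrightarrow> s \<in> A \<Longrightarrow> a \<le> f s"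
    "\<And>s. s \<in> set_pmf M \<Longrightarrow> 0 \<le> f s" "(\<integral>\<^sup>+s. ennreal (f s) \<partial>M) \<le> ennreal b"
  shows "measure_pmf.prob M A \<le> b / a"
proof -
  have "ennreal (a * measure_pmf.prob M A) = ennreal a * emeasure (measure_pmf M) A"
    using assms(1) by (simp add: measure_pmf.emeasure_eq_measure ennreal_mult')
  also have "\<dots> = (\<integral>\<^sup>+s. ennreal a * indicator A s \<partial>M)"
    by (simp add: nn_integral_cmult_indicator)
  also have "\<dots> \<le> (\<integral>\<^sup>+s. ennreal (f s) \<partial>M)"
    using assms by (intro nn_integral_mono_AE AE_pmfI) (auto simp: indicator_def intro: ennreal_leI)
  also have "\<dots> \<le> ennreal b" by (rule assms(5))
  finally have "a * measure_pmf.prob M A \<le> b" using assms(2) by (simp add: ennreal_le_iff)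
  then show ?thesis using assms(1) by (simp add: field_simps)
qed

locale rf =
  fixes E :: "nat \<Rightarrow> nat \<Rightarrow> bool" and V :: "nat set" and p :: real and I0 :: "nat set" and d :: nat and eps :: real
  assumes finV: "finite V"
    and symE: "\<forall>u v. E u v \<longrightarrow> u \<in> V \<and> v \<in> V \<and> u \<noteq> v \<and> E v u"
    and deg: "\<forall>v\<in>V. card {u \<in> V. E v u} \<le> d"
    and d2: "d \<ge> 2" and I0V: "I0 \<subseteq> V" and p0: "0 \<le> p" and p1: "p \<le> 1"
    and pe: "real (d - 1) * p \<le> 1 - eps" and eps0: "0 < eps" and eps1: "eps \<le> 1"
begin

lemma dp2: "real d * p \<le> 2"
proof -
  have "real d \<le> 2 * real (d - 1)" using d2 by auto
  then have "real d * p \<le> 2 * real (d - 1) * p" using p0 by (intro mult_right_mono) auto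
  also have "\<dots> \<le> 2" using pe eps0 by linarith
  finally show ?thesis .
qed

lemma supp_inv: "s \<in> set_pmf (rf_state E V p I0 (Suc t)) \<Longrightarrow> Inv E V (fst s) (snd s)"
proof (induction t arbitrary: s)
  case 0
  then show ?case using I0V by (auto intro!: inv_step[of V I0 "{}"] simp: Inv0_def)
next
  case (Suc t)
  then obtain s' where s': "s' \<in> set_pmf (rf_state E V p I0 (Suc t))" "s \<in> set_pmf (rf_step E V p s')"
    by auto
  then have "Inv E V (fst s') (snd s')" using Suc.IH by blast
  then show ?case using s' inv_step[of V "fst s'" "snd s'" s E p] by (auto simp: Inv_def)
qed

lemma supp_inv0: "s \<in> set_pmf (rf_state E V p I0 t) \<Longrightarrow> Inv0 V (fst s) (snd s)"
  using supp_inv[of s] I0V by (cases t) (auto simp: Inv_def Inv0_def)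

lemma first_moment:
  "(\<integral>\<^sup>+s. ennreal (real (card (fst s))) \<partial>rf_state E V p I0 (Suc t)) \<le> ennreal (2 * (1 - eps) ^ t * real (card I0))"
proof (induction t)
  case 0
  have inv: "Inv0 V I0 {}" using I0V by (simp add: Inv0_def)
  have "(\<integral>\<^sup>+s. ennreal (real (card (fst s))) \<partial>rf_state E V p I0 (Suc 0))
      = (\<integral>\<^sup>+s. ennreal (real (card (fst s))) \<partial>rf_step E V p (I0, {}))" by simp
  also have "\<dots> \<le> ennreal (real d * p * real (card I0))"
    using inv p0 p1 nbr0[OF finV inv deg] by (intro step_first card_Nset finV) auto
  also have "\<dots> \<le> ennreal (2 * (1 - eps) ^ 0 * real (card I0))"
    using dp2 by (intro ennreal_leI mult_right_mono) auto
  finally show ?case .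
next
  case (Suc t)
  have "(\<integral>\<^sup>+s. ennreal (real (card (fst s))) \<partial>rf_state E V p I0 (Suc (Suc t)))
      = (\<integral>\<^sup>+s. (\<integral>\<^sup>+s'. ennreal (real (card (fst s'))) \<partial>rf_step E V p s) \<partial>rf_state E V p I0 (Suc t))" by simp
  also have "\<dots> \<le> (\<integral>\<^sup>+s. ennreal (1 - eps) * ennreal (real (card (fst s))) \<partial>rf_state E V p I0 (Suc t))"
  proof (intro nn_integral_mono_AE AE_pmfI)
    fix s assume s: "s \<in> set_pmf (rf_state E V p I0 (Suc t))"
    obtain I R where sIR: "s = (I, R)" by fastforce
    have inv: "Inv E V I R" using supp_inv[OF s] sIR by simp
    then have inv0: "Inv0 V I R" by (simp add: Inv_def)
    have "(\<integral>\<^sup>+s'. ennreal (real (card (fst s'))) \<partial>rf_step E V p (I, R)) \<le> ennreal (real (d - 1) * p * real (card I))"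
      using inv0 p0 p1 nbr1[OF finV inv deg _ symE] by (intro step_first card_Nset finV) auto
    also have "\<dots> \<le> ennreal ((1 - eps) * real (card I))"
      using pe by (intro ennreal_leI mult_right_mono) auto
    finally show "(\<integral>\<^sup>+s'. ennreal (real (card (fst s'))) \<partial>rf_step E V p s) \<le> ennreal (1 - eps) * ennreal (real (card (fst s)))"
      using sIR eps1 by (simp add: ennreal_mult'[symmetric])
  qed
  also have "\<dots> = ennreal (1 - eps) * (\<integral>\<^sup>+s. ennreal (real (card (fst s))) \<partial>rf_state E V p I0 (Suc t))"
    by (simp add: nn_integral_cmult)
  also have "\<dots> \<le> ennreal (1 - eps) * ennreal (2 * (1 - eps) ^ t * real (card I0))"
    by (intro mult_left_mono Suc.IH) auto
  also have "\<dots> = ennreal (2 * (1 - eps) ^ Suc t * real (card I0))"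
    using eps1 by (simp add: ennreal_mult'[symmetric] algebra_simps)
  finally show ?case .
qed

lemma exp_moment:
  assumes mu0: "0 \<le> \<mu>" and lm: "lam + (1 - eps) * (exp \<mu> - 1) \<le> \<mu>"
  shows "(\<integral>\<^sup>+s. ennreal (exp (lam * real (card (snd s)) + \<mu> * real (card (fst s)))) \<partial>rf_state E V p I0 (Suc t))
     \<le> ennreal (exp ((lam + 2 * (exp \<mu> - 1)) * real (card I0)))"
proof (induction t)
  case 0
  have inv: "Inv0 V I0 {}" using I0V by (simp add: Inv0_def)
  have "(\<integral>\<^sup>+s. ennreal (exp (lam * real (card (snd s)) + \<mu> * real (card (fst s)))) \<partial>rf_state E V p I0 (Suc 0))
      = (\<integral>\<^sup>+s. ennreal (exp (lam * real (card (snd s)) + \<mu> * real (card (fst s)))) \<partial>rf_step E V p (I0, {}))" by simp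
  also have "\<dots> \<le> ennreal (exp (lam * real (card ({}::nat set)) + (lam + real d * p * (exp \<mu> - 1)) * real (card I0)))"
    using inv p0 p1 mu0 nbr0[OF finV inv deg] by (intro step_exp card_Nset finV) auto
  also have "\<dots> \<le> ennreal (exp ((lam + 2 * (exp \<mu> - 1)) * real (card I0)))"
  proof (intro ennreal_leI)
    have e: "0 \<le> exp \<mu> - 1" using mu0 by simp
    have "real d * p * (exp \<mu> - 1) \<le> 2 * (exp \<mu> - 1)" using dp2 e by (intro mult_right_mono) auto
    then show "exp (lam * real (card ({}::nat set)) + (lam + real d * p * (exp \<mu> - 1)) * real (card I0))
      \<le> exp ((lam + 2 * (exp \<mu> - 1)) * real (card I0))" by (simp add: mult_right_mono)
  qed
  finally show ?case .
next
  case (Suc t)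
  have "(\<integral>\<^sup>+s. ennreal (exp (lam * real (card (snd s)) + \<mu> * real (card (fst s)))) \<partial>rf_state E V p I0 (Suc (Suc t)))
      = (\<integral>\<^sup>+s. (\<integral>\<^sup>+s'. ennreal (exp (lam * real (card (snd s')) + \<mu> * real (card (fst s')))) \<partial>rf_step E V p s) \<partial>rf_state E V p I0 (Suc t))" by simp
  also have "\<dots> \<le> (\<integral>\<^sup>+s. ennreal (exp (lam * real (card (snd s)) + \<mu> * real (card (fst s)))) \<partial>rf_state E V p I0 (Suc t))"
  proof (intro nn_integral_mono_AE AE_pmfI)
    fix s assume s: "s \<in> set_pmf (rf_state E V p I0 (Suc t))"
    obtain I R where sIR: "s = (I, R)" by fastforce
    have inv: "Inv E V I R" using supp_inv[OF s] sIR by simp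
    then have inv0: "Inv0 V I R" by (simp add: Inv_def)
    have "(\<integral>\<^sup>+s'. ennreal (exp (lam * real (card (snd s')) + \<mu> * real (card (fst s')))) \<partial>rf_step E V p (I, R))
       \<le> ennreal (exp (lam * real (card R) + (lam + real (d - 1) * p * (exp \<mu> - 1)) * real (card I)))"
      using inv0 p0 p1 mu0 nbr1[OF finV inv deg _ symE] by (intro step_exp card_Nset finV) auto
    also have "\<dots> \<le> ennreal (exp (lam * real (card R) + \<mu> * real (card I)))"
    proof (intro ennreal_leI)
      have e: "0 \<le> exp \<mu> - 1" using mu0 by simp
      have "real (d - 1) * p * (exp \<mu> - 1) \<le> (1 - eps) * (exp \<mu> - 1)" using pe e by (intro mult_right_mono) auto
      then have "lam + real (d - 1) * p * (exp \<mu> - 1) \<le> \<mu>" using lm by linarith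
      then show "exp (lam * real (card R) + (lam + real (d - 1) * p * (exp \<mu> - 1)) * real (card I))
         \<le> exp (lam * real (card R) + \<mu> * real (card I))" by (simp add: mult_right_mono)
    qed
    finally show "(\<integral>\<^sup>+s'. ennreal (exp (lam * real (card (snd s')) + \<mu> * real (card (fst s')))) \<partial>rf_step E V p s)
       \<le> ennreal (exp (lam * real (card (snd s)) + \<mu> * real (card (fst s))))"
      using sIR by simp
  qed
  also have "\<dots> \<le> ennreal (exp ((lam + 2 * (exp \<mu> - 1)) * real (card I0)))" by (rule Suc.IH)
  finally show ?case .
qed

lemma prob_alive:
  "measure_pmf.prob (rf_state E V p I0 (Suc t)) {s. fst s \<noteq> {}} \<le> 2 * (1 - eps) ^ t * real (card I0)"
proof -
  have "measure_pmf.prob (rf_state E V p I0 (Suc t)) {s. fst s \<noteq> {}} \<le> (2 * (1 - eps) ^ t * real (card I0)) / 1"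
  proof (rule markov_pmf[where f = "\<lambda>s. real (card (fst s))"])
    fix s assume s: "s \<in> set_pmf (rf_state E V p I0 (Suc t))" "s \<in> {s. fst s \<noteq> {}}"
    have "finite (fst s)" using supp_inv0[OF s(1)] finV by (auto simp: Inv0_def intro: finite_subset)
    then show "1 \<le> real (card (fst s))" using s(2) by (simp add: Suc_le_eq card_gt_0_iff)
  qed (use first_moment eps1 in auto)
  then show ?thesis by simp
qed

lemma prob_big:
  assumes mu0: "0 \<le> \<mu>" and lm: "lam + (1 - eps) * (exp \<mu> - 1) \<le> \<mu>" and lam0: "0 \<le> lam" and lmu: "lam \<le> \<mu>"
  shows "measure_pmf.prob (rf_state E V p I0 (Suc t)) {s. real (card (fst s \<union> snd s)) > K}
     \<le> exp ((lam + 2 * (exp \<mu> - 1)) * real (card I0)) / exp (lam * K)"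
proof (rule markov_pmf[where f = "\<lambda>s. exp (lam * real (card (snd s)) + \<mu> * real (card (fst s)))"])
  fix s assume s: "s \<in> set_pmf (rf_state E V p I0 (Suc t))" "s \<in> {s. real (card (fst s \<union> snd s)) > K}"
  have fin: "finite (fst s)" "finite (snd s)" using supp_inv0[OF s(1)] finV by (auto simp: Inv0_def intro: finite_subset)
  have "lam * K \<le> lam * real (card (fst s \<union> snd s))" using s(2) lam0 by (intro mult_left_mono) auto
  also have "\<dots> \<le> lam * (real (card (fst s)) + real (card (snd s)))"
    using lam0 card_Un_le[of "fst s" "snd s"] by (intro mult_left_mono) (auto simp flip: of_nat_add)
  also have "\<dots> \<le> lam * real (card (snd s)) + \<mu> * real (card (fst s))"
    using lmu by (simp add: algebra_simps mult_right_mono)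
  finally show "exp (lam * K) \<le> exp (lam * real (card (snd s)) + \<mu> * real (card (fst s)))" by simp
qed (use exp_moment[OF mu0 lm] in auto)

end

lemma P1_num:
  fixes e0 C L n m :: real and t :: nat
  assumes "0 < e0" "e0 \<le> 1/2" "4 \<le> e0 * C" "L = ln n" "4 \<le> n" "exp 1 \<le> n" "C * L - 2 \<le> real t"
    "m \<le> n" "0 \<le> m"
  shows "2 * (1 - e0) ^ t * m \<le> 1 / n"
proof -
  have n0: "0 < n" using assms by simp
  have L0: "1 \<le> L" using assms(4,6) n0 by (simp add: ln_ge_iff)
  have "(1 - e0) ^ t \<le> exp (- e0) ^ t"
    using assms(1,2) exp_ge_add_one_self[of "-e0"] by (intro power_mono) auto
  also have "\<dots> = exp (- e0 * real t)" by (simp add: exp_of_nat_mult[symmetric] mult.commute)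
  also have "\<dots> \<le> exp (1 - 4 * L)"
  proof -
    have "e0 * (C * L - 2) \<le> e0 * real t" using assms(1,7) by (intro mult_left_mono) auto
    moreover have "4 * L \<le> e0 * C * L" using assms(3) L0 by (intro mult_right_mono) auto
    ultimately show ?thesis using assms(2) by (simp add: algebra_simps)
  qed
  also have "\<dots> = exp 1 / n ^ 4"
    using n0 assms(4) by (simp add: exp_diff exp_of_nat_mult[of 4, simplified])
  finally have a: "(1 - e0) ^ t \<le> exp 1 / n ^ 4" .
  have "2 * (1 - e0) ^ t * m \<le> 2 * (exp 1 / n ^ 4) * n"
    using a assms(1,2,8,9) by (intro mult_mono) auto
  also have "\<dots> = 2 * exp 1 / n ^ 3 / n * n" using n0 by (simp add: power_eq_if field_simps)
  also have "\<dots> \<le> 1 / n"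
  proof -
    have "4 * n \<le> n * n" using assms(5) by (intro mult_right_mono) auto
    then have "2 * exp 1 \<le> n * n" using assms(5,6) by linarith
    then have "2 * exp 1 \<le> n ^ 2" by (simp add: power2_eq_square)
    then have "2 * exp 1 / n ^ 3 \<le> n ^ 2 / n ^ 3" using n0 by (intro divide_right_mono) auto
    also have "\<dots> = 1 / n" using n0 by (simp add: power_eq_if field_simps)
    finally show ?thesis using n0 by simp
  qed
  finally show ?thesis .
qed

lemma P2_num:
  fixes lam C L B n m :: real
  assumes "0 < lam" "2 \<le> lam * C" "B \<le> L" "0 \<le> L" "1 \<le> m" "0 < n" "L = ln n"
  shows "exp (B * m) / exp (lam * (C * m * L)) \<le> 1 / n"
proof -
  have "exp (B * m) / exp (lam * (C * m * L)) = exp (m * (B - lam * C * L))"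
    by (simp add: exp_diff[symmetric] algebra_simps)
  also have "\<dots> \<le> exp (- L)"
  proof -
    have "2 * L \<le> lam * C * L" using assms by (intro mult_right_mono) auto
    then have h: "B - lam * C * L \<le> - L" using assms by linarith
    have h0: "B - lam * C * L \<le> 0" using h assms(4) by linarith
    have "m * (B - lam * C * L) \<le> 1 * (B - lam * C * L)"
      by (rule mult_right_mono_neg[OF assms(5) h0])
    then show ?thesis using h by simp
  qed
  also have "\<dots> = 1 / n" using assms by (simp add: exp_minus field_simps)
  finally show ?thesis .
qed

theorem mainTheorem3:
  fixes \<epsilon> :: real
  assumes "\<epsilon> > 0"
  shows "\<exists>C>0. \<exists>c>0. \<exists>n0::nat. \<forall>(d::nat) (V::nat set) (E::nat \<Rightarrow> nat \<Rightarrow> bool) (p::real) (I0::nat set).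
    d \<ge> 2 \<and> finite V \<and> card V \<ge> n0
    \<and> (\<forall>u v. E u v \<longrightarrow> u \<in> V \<and> v \<in> V \<and> u \<noteq> v \<and> E v u)
    \<and> (\<forall>v\<in>V. card {u \<in> V. E v u} \<le> d)
    \<and> 0 \<le> p \<and> p < (1 - \<epsilon>) / (real d - 1)
    \<and> I0 \<subseteq> V \<and> I0 \<noteq> {}
    \<longrightarrow> measure_pmf.prob (rf_state E V p I0 (nat \<lfloor>C * ln (real (card V))\<rfloor>))
          {(I, R). I = {} \<and> real (card (I \<union> R)) \<le> C * real (card I0) * ln (real (card V))}
        \<ge> 1 - real (card V) powr (- c)"
proof -
  define e0 where "e0 = min \<epsilon> (1/2)"
  have e0: "0 < e0" "e0 \<le> 1/2" "e0 \<le> \<epsilon>" using assms by (auto simp: e0_def)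
  define \<delta> where "\<delta> = e0 / 2"
  have \<delta>: "0 < \<delta>" "\<delta> \<le> 1/4" using e0 by (auto simp: \<delta>_def)
  define \<mu> where "\<mu> = ln (1 + \<delta>)"
  define lam where "lam = \<mu> - (1 - e0) * \<delta>"
  define B where "B = lam + 2 * \<delta>"
  have expmu: "exp \<mu> - 1 = \<delta>" using \<delta> by (simp add: \<mu>_def)
  have mu0: "0 \<le> \<mu>" using \<delta> by (simp add: \<mu>_def)
  have lam0: "0 < lam"
  proof -
    have "\<delta> - \<delta>\<^sup>2 \<le> \<mu>" unfolding \<mu>_def using \<delta> by (intro ln_one_plus_pos_lower_bound) auto
    moreover have "0 < \<delta> * \<delta>" using \<delta> by simp
    ultimately show ?thesis unfolding lam_def \<delta>_def by (simp add: power2_eq_square algebra_simps)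
  qed
  have lmu: "lam \<le> \<mu>" using e0 \<delta> by (simp add: lam_def)
  have lm: "lam + (1 - e0) * (exp \<mu> - 1) \<le> \<mu>" by (simp add: expmu lam_def)
  define C where "C = 4 / e0 + 2 / lam"
  have C0: "0 < C" using e0 lam0 unfolding C_def by (intro add_pos_pos divide_pos_pos) auto
  have eC: "4 \<le> e0 * C" using e0 lam0 by (simp add: C_def algebra_simps)
  have lC: "2 \<le> lam * C" using e0 lam0 by (simp add: C_def algebra_simps)
  define n0 :: nat where "n0 = nat \<lceil>exp (max B 1)\<rceil> + 4"
  show ?thesis
  proof (rule exI[of _ C], rule conjI[OF C0], rule exI[of _ "1/2::real"], rule conjI, simp, rule exI[of _ n0], intro allI impI)
    fix d :: nat and V :: "nat set" and E :: "nat \<Rightarrow> nat \<Rightarrow> bool" and p :: real and I0 :: "nat set"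
    assume H: "d \<ge> 2 \<and> finite V \<and> card V \<ge> n0
      \<and> (\<forall>u v. E u v \<longrightarrow> u \<in> V \<and> v \<in> V \<and> u \<noteq> v \<and> E v u)
      \<and> (\<forall>v\<in>V. card {u \<in> V. E v u} \<le> d)
      \<and> 0 \<le> p \<and> p < (1 - \<epsilon>) / (real d - 1)
      \<and> I0 \<subseteq> V \<and> I0 \<noteq> {}"
    then have d2: "d \<ge> 2" and finV: "finite V" and nV: "card V \<ge> n0"
      and symE: "\<forall>u v. E u v \<longrightarrow> u \<in> V \<and> v \<in> V \<and> u \<noteq> v \<and> E v u"
      and deg: "\<forall>v\<in>V. card {u \<in> V. E v u} \<le> d" and p0: "0 \<le> p" and pl: "p < (1 - \<epsilon>) / (real d - 1)"
      and I0V: "I0 \<subseteq> V" and I0ne: "I0 \<noteq> {}" by auto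
    define n where "n = real (card V)"
    define L where "L = ln n"
    have n4: "4 \<le> n" using nV by (simp add: n_def n0_def)
    have nexp: "exp (max B 1) \<le> n"
    proof -
      have "exp (max B 1) \<le> real (nat \<lceil>exp (max B 1)\<rceil>)" by linarith
      also have "\<dots> \<le> n" using nV by (simp add: n_def n0_def)
      finally show ?thesis .
    qed
    have npos: "0 < n" using n4 by simp
    have "exp 1 \<le> exp (max B 1)" "exp B \<le> exp (max B 1)" by auto
    then have ne1: "exp 1 \<le> n" "exp B \<le> n" using nexp by linarith+
    have LB: "max B 1 \<le> L" unfolding L_def using npos ne1 by (simp add: ln_ge_iff)
    have dd: "real d - 1 = real (d - 1)" using d2 by (simp add: of_nat_diff)
    have dpos: "0 < real (d - 1)" using d2 by simp
    have pe: "real (d - 1) * p \<le> 1 - e0"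
    proof -
      have "p * real (d - 1) < 1 - \<epsilon>"
        using pos_less_divide_eq[OF dpos, THEN iffD1, OF pl[unfolded dd]] .
      then show ?thesis using e0 by (simp add: mult.commute)
    qed
    have p1: "p \<le> 1"
    proof -
      have "1 * p \<le> real (d - 1) * p" using p0 d2 by (intro mult_right_mono) auto
      then show ?thesis using pe e0 by linarith
    qed
    interpret rf E V p I0 d e0
      by unfold_locales (use finV symE deg d2 I0V p0 p1 pe e0 in auto)
    define T where "T = nat \<lfloor>C * L\<rfloor>"
    define t where "t = T - 1"
    have CL: "8 \<le> C * L"
    proof -
      have "e0 * C \<le> (1/2) * C" using e0 C0 by (intro mult_right_mono) auto
      then have C8: "8 \<le> C" using eC by linarith
      have L1: "1 \<le> L" using LB by simp
      have "8 * 1 \<le> C * L" using C8 L1 by (intro mult_mono) auto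
      then show ?thesis by simp
    qed
    have Tt: "T = Suc t" using CL by (simp add: t_def T_def)
    have tb: "C * L - 2 \<le> real t"
    proof -
      have "C * L - 1 \<le> real T" unfolding T_def using CL by linarith
      then show ?thesis using Tt by simp
    qed
    define m where "m = real (card I0)"
    have m1: "1 \<le> m" using I0ne I0V finV by (simp add: m_def Suc_le_eq card_gt_0_iff finite_subset)
    have mn: "m \<le> n" using I0V finV by (simp add: m_def n_def card_mono)
    define K where "K = C * m * L"
    define M where "M = rf_state E V p I0 T"
    let ?good = "{(I, R). I = {} \<and> real (card (I \<union> R)) \<le> K}"
    have P1: "measure_pmf.prob M {s. fst s \<noteq> {}} \<le> 1 / n"
    proof -
      have "measure_pmf.prob M {s. fst s \<noteq> {}} \<le> 2 * (1 - e0) ^ t * m"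
        unfolding M_def Tt m_def by (rule prob_alive)
      also have "\<dots> \<le> 1 / n"
        using e0 eC L_def n4 ne1 tb mn m1 by (intro P1_num) auto
      finally show ?thesis .
    qed
    have P2: "measure_pmf.prob M {s. real (card (fst s \<union> snd s)) > K} \<le> 1 / n"
    proof -
      have "measure_pmf.prob M {s. real (card (fst s \<union> snd s)) > K}
          \<le> exp ((lam + 2 * (exp \<mu> - 1)) * m) / exp (lam * K)"
        unfolding M_def Tt m_def using mu0 lm lam0 lmu by (intro prob_big) auto
      also have "\<dots> = exp (B * m) / exp (lam * (C * m * L))" by (simp add: expmu B_def K_def)
      also have "\<dots> \<le> 1 / n"
        using lam0 lC LB m1 npos n4 L_def by (intro P2_num) auto
      finally show ?thesis .
    qed
    have "1 - measure_pmf.prob M ?good = measure_pmf.prob M (UNIV - ?good)"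
      using measure_pmf.prob_compl[of ?good M] by simp
    also have "\<dots> \<le> measure_pmf.prob M ({s. fst s \<noteq> {}} \<union> {s. real (card (fst s \<union> snd s)) > K})"
      by (intro measure_pmf.finite_measure_mono) auto
    also have "\<dots> \<le> measure_pmf.prob M {s. fst s \<noteq> {}} + measure_pmf.prob M {s. real (card (fst s \<union> snd s)) > K}"
      by (rule measure_Un_le) auto
    also have "\<dots> \<le> 2 / n" using P1 P2 by simp
    also have "\<dots> \<le> n powr (- (1/2))"
    proof -
      have s2: "2 \<le> sqrt n" using n4 real_le_rsqrt by force
      have "2 / n = 2 / (sqrt n * sqrt n)" using npos by simp
      also have "\<dots> \<le> sqrt n / (sqrt n * sqrt n)" using s2 npos by (intro divide_right_mono) auto
      also have "\<dots> = 1 / sqrt n" using npos by (simp add: field_simps)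
      also have "\<dots> = n powr (- (1/2))" using npos by (simp add: powr_minus_divide powr_half_sqrt)
      finally show ?thesis .
    qed
    finally have "1 - n powr (- (1/2)) \<le> measure_pmf.prob M ?good" by linarith
    then show "1 - real (card V) powr (- (1/2)) \<le> measure_pmf.prob (rf_state E V p I0 (nat \<lfloor>C * ln (real (card V))\<rfloor>))
          {(I, R). I = {} \<and> real (card (I \<union> R)) \<le> C * real (card I0) * ln (real (card V))}"
      by (simp add: M_def T_def K_def m_def L_def n_def)
  qed
qed

end
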